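(* Consider the TEP model described in the context. Let $\rho^1,\dots,\rho^m$, $m>1$, be directed paths of buses, each consisting of consecutive bus pairs that form established corridors, such that all paths have the same starting bus and the same ending bus, and the intermediate buses of distinct paths are disjoint: writing $\rho^r=(i^r_0,i^r_1),\dots,(i^r_{L_r-1},i^r_{L_r})$, we have $i^r_0=i^{r'}_0$, $i^r_{L_r}=i^{r'}_{L_{r'}}$ and $\{i^r_t\}_{t=1}^{L_r-1}\cap\{i^{r'}_t\}_{t=1}^{L_{r'}-1}=\emptyset$ for $r\ne r'$. For each path $\rho^r$ and each $t$, fix an existing-line index $k^r_t\in\{1,\dots,\omega^0_{i^r_{t-1}i^r_t}\}$, and define $$\pi^r_0=\sum_{t=1}^{L_r}x_{i^r_{t-1}i^r_t,k^r_t}\,\overline P^0_{i^r_{t-1}i^r_t,k^r_t},\qquad \pi^r_t=\operatorname{sgn}(i^r_{t-1}-i^r_t)\,x_{i^r_{t-1}i^r_t,k^r_t}\ (t=1,\dots,L_r).$$ Then for every $r=1,\dots,m$ the two-sided inequality $$-\min\{\pi^n_0\}_{n=1}^m\;\le\;\sum_{t=1}^{L_r}\pi^r_t\,\tilde P^0_{i^r_{t-1}i^r_t,k^r_t}\;\le\;\min\{\pi^n_0\}_{n=1}^m$$ is valid for TEP (satisfied by every feasible solution), for any such choices of line indices.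
   Context: TEP model (DC-power-flow transmission expansion planning, disjunctive MILP). $B$ is a finite set of buses (integers); $\Omega$ is a set of corridors $(i,j)$ of buses, stored with $i<j$. Corridor $(i,j)$ has $\omega^0_{ij}\ge 0$ existing lines and $\bar\omega_{ij}\ge0$ candidate lines. Corridor $(i,j)$ is *established* if $\omega^0_{ij}>0$ and an *expansion corridor* if $\omega^0_{ij}=0$. Line $k$ of corridor $(i,j)$ has susceptance $b_{ij,k}$ and reactance $x_{ij,k}=-1/b_{ij,k}$; existing lines have capacity $\overline P^0_{ij,k}$, candidate lines capacity $\overline P_{ij,k}$. Further parameters: demands $d_n$, generation limits $\overline g_n$, angle limit $\overline\theta$, big-M constants $M_{ij}$, costs. Variables: binary $y_{ij,k}$, flows $P^0_{ij,k}$ (existing lines) and $P_{ij,k}$ (candidate lines), generation $g_n\ge0$, bus angles $\theta_n$ (free). Constraints: for each bus $n$, $\sum_{(n,i)\in\Omega}\big(\sum_k P^0_{ni,k}+\sum_k P_{ni,k}\big)-\sum_{(i,n)\in\Omega}\big(\sum_k P^0_{in,k}+\sum_k P_{in,k}\big)+g_n=d_n$; $-\overline P^0_{ij,k}\le P^0_{ij,k}\le \overline P^0_{ij,k}$; $-\overline P_{ij,k}y_{ij,k}\le P_{ij,k}\le\overline P_{ij,k}y_{ij,k}$; $x_{ij,k}P^0_{ij,k}-(\theta_i-\theta_j)=0$ for existing lines; $-M_{ij}(1-y_{ij,k})\le x_{ij,k}P_{ij,k}-(\theta_i-\theta_j)\le M_{ij}(1-y_{ij,k})$ for candidate lines; $g_n\le\overline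 g_n$; $-\overline\theta\le\theta_i-\theta_j\le\overline\theta$ for $(i,j)\in\Omega$; $y_{ij,k}\in\{0,1\}$. An inequality is *valid for TEP* if every feasible point of this model satisfies it. Notation along paths: for a bus pair traversed as $(i,j)$ with $i>j$ (stored corridor $(j,i)$), set $x_{ij,k}=x_{ji,k}$, $\overline P^0_{ij,k}=\overline P^0_{ji,k}$ and $P^0_{ij,k}=-P^0_{ji,k}$. $\operatorname{sgn}(a)=1$ if $a>0$, $-1$ if $a<0$. Define $\tilde P^0_{ij,k}=\operatorname{sgn}(j-i)\,P^0_{ij,k}$. *)

theory Defs
  imports Complex_Main
begin

text \<open>Data of a TEP instance.  Buses are integers; corridors are stored as
  pairs (i,j) with i < j.  Existing lines of corridor e are indexed 1..w0 e,
  candidate lines 1..wc e.\<close>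

record tep_data =
  buses     :: "int set"
  corridors :: "(int \<times> int) set"
  w0        :: "int \<times> int \<Rightarrow> nat"
  wc        :: "int \<times> int \<Rightarrow> nat"
  susc0     :: "int \<times> int \<Rightarrow> nat \<Rightarrow> real"
  susc      :: "int \<times> int \<Rightarrow> nat \<Rightarrow> real"
  cap0      :: "int \<times> int \<Rightarrow> nat \<Rightarrow> real"
  cap       :: "int \<times> int \<Rightarrow> nat \<Rightarrow> real"
  demand    :: "int \<Rightarrow> real"
  gmax      :: "int \<Rightarrow> real"
  thmax     :: real
  bigM      :: "int \<times> int \<Rightarrow> real"

definition react0 :: "tep_data \<Rightarrow> int \<times> int \<Rightarrow> nat \<Rightarrow> real" where
  "react0 D e k = - 1 / susc0 D e k"
definition react :: "tep_data \<Rightarrow> int \<times> int \<Rightarrow> nat \<Rightarrow> real" where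
  "react D e k = - 1 / susc D e k"

definition tep_wf :: "tep_data \<Rightarrow> bool" where
  "tep_wf D \<longleftrightarrow> finite (buses D) \<and> corridors D \<subseteq> buses D \<times> buses D
     \<and> (\<forall>(i,j)\<in>corridors D. i < j)"

definition corr_flow :: "tep_data \<Rightarrow> (int \<times> int \<Rightarrow> nat \<Rightarrow> real) \<Rightarrow> (int \<times> int \<Rightarrow> nat \<Rightarrow> real)
    \<Rightarrow> int \<times> int \<Rightarrow> real" where
  "corr_flow D P0 P e = (\<Sum>k=1..w0 D e. P0 e k) + (\<Sum>k=1..wc D e. P e k)"

definition tep_feasible :: "tep_data \<Rightarrow> (int \<times> int \<Rightarrow> nat \<Rightarrow> real) \<Rightarrow> (int \<times> int \<Rightarrow> nat \<Rightarrow> real)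
    \<Rightarrow> (int \<times> int \<Rightarrow> nat \<Rightarrow> real) \<Rightarrow> (int \<Rightarrow> real) \<Rightarrow> (int \<Rightarrow> real) \<Rightarrow> bool" where
  "tep_feasible D y P0 P g \<theta> \<longleftrightarrow>
     (\<forall>n\<in>buses D.
        (\<Sum>e\<in>{e\<in>corridors D. fst e = n}. corr_flow D P0 P e)
      - (\<Sum>e\<in>{e\<in>corridors D. snd e = n}. corr_flow D P0 P e) + g n = demand D n)
   \<and> (\<forall>(i,j)\<in>corridors D. \<forall>k\<in>{1..w0 D (i,j)}.
        - cap0 D (i,j) k \<le> P0 (i,j) k \<and> P0 (i,j) k \<le> cap0 D (i,j) k
      \<and> react0 D (i,j) k * P0 (i,j) k - (\<theta> i - \<theta> j) = 0)
   \<and> (\<forall>(i,j)\<in>corridors D. \<forall>k\<in>{1..wc D (i,j)}.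
        y (i,j) k \<in> {0,1}
      \<and> - cap D (i,j) k * y (i,j) k \<le> P (i,j) k \<and> P (i,j) k \<le> cap D (i,j) k * y (i,j) k
      \<and> - bigM D (i,j) * (1 - y (i,j) k) \<le> react D (i,j) k * P (i,j) k - (\<theta> i - \<theta> j)
      \<and> react D (i,j) k * P (i,j) k - (\<theta> i - \<theta> j) \<le> bigM D (i,j) * (1 - y (i,j) k))
   \<and> (\<forall>n\<in>buses D. 0 \<le> g n \<and> g n \<le> gmax D n)
   \<and> (\<forall>(i,j)\<in>corridors D. - thmax D \<le> \<theta> i - \<theta> j \<and> \<theta> i - \<theta> j \<le> thmax D)"

definition corr :: "int \<Rightarrow> int \<Rightarrow> int \<times> int" where
  "corr i j = (min i j, max i j)"

definition xo :: "tep_data \<Rightarrow> int \<Rightarrow> int \<Rightarrow> nat \<Rightarrow> real" where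
  "xo D i j k = react0 D (corr i j) k"
definition capo :: "tep_data \<Rightarrow> int \<Rightarrow> int \<Rightarrow> nat \<Rightarrow> real" where
  "capo D i j k = cap0 D (corr i j) k"
definition P0o :: "(int \<times> int \<Rightarrow> nat \<Rightarrow> real) \<Rightarrow> int \<Rightarrow> int \<Rightarrow> nat \<Rightarrow> real" where
  "P0o P0 i j k = (if i < j then P0 (i,j) k else - P0 (j,i) k)"
definition P0tilde :: "(int \<times> int \<Rightarrow> nat \<Rightarrow> real) \<Rightarrow> int \<Rightarrow> int \<Rightarrow> nat \<Rightarrow> real" where
  "P0tilde P0 i j k = sgn (real_of_int (j - i)) * P0o P0 i j k"

text \<open>A path is a list of buses [i_0, ..., i_L]; L = length - 1;
  bus pair t (t = 1..L) is (i_{t-1}, i_t).  ks t is the chosen existing line.\<close>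
definition pi0 :: "tep_data \<Rightarrow> int list \<Rightarrow> (nat \<Rightarrow> nat) \<Rightarrow> real" where
  "pi0 D p ks = (\<Sum>t=1..length p - 1. xo D (p!(t-1)) (p!t) (ks t) * capo D (p!(t-1)) (p!t) (ks t))"
definition pit :: "tep_data \<Rightarrow> int list \<Rightarrow> (nat \<Rightarrow> nat) \<Rightarrow> nat \<Rightarrow> real" where
  "pit D p ks t = sgn (real_of_int (p!(t-1) - p!t)) * xo D (p!(t-1)) (p!t) (ks t)"

definition established_path :: "tep_data \<Rightarrow> int list \<Rightarrow> bool" where
  "established_path D p \<longleftrightarrow> length p \<ge> 2 \<and> distinct p \<and>
     (\<forall>t\<in>{1..length p - 1}. corr (p!(t-1)) (p!t) \<in> corridors D \<and> w0 D (corr (p!(t-1)) (p!t)) > 0)"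

definition interior :: "int list \<Rightarrow> int set" where
  "interior p = {p!t | t. 1 \<le> t \<and> t \<le> length p - 2}"

end

theory Submission
  imports Defs
begin

lemma edge_facts:
  assumes wf: "tep_wf D" and neg: "\<forall>e k. susc0 D e k < 0"
    and feas: "tep_feasible D y P0 P g \<theta>"
    and cin: "corr i j \<in> corridors D" and ij: "i \<noteq> j"
    and k1: "1 \<le> k" and k2: "k \<le> w0 D (corr i j)"
  shows "pit_like = sgn (real_of_int (i - j)) * xo D i j k * P0tilde P0 i j k
           \<Longrightarrow> pit_like = \<theta> j - \<theta> i"
    and "\<bar>\<theta> i - \<theta> j\<bar> \<le> xo D i j k * capo D i j k"
proof -
  have sn: "susc0 D (corr i j) k < 0" using neg by blast
  have xpos: "xo D i j k > 0" using sn unfolding xo_def react0_def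
    by (simp add: neg_divide_less_eq)
  have C: "\<forall>(a,b)\<in>corridors D. \<forall>k\<in>{1..w0 D (a,b)}.
        - cap0 D (a,b) k \<le> P0 (a,b) k \<and> P0 (a,b) k \<le> cap0 D (a,b) k
      \<and> react0 D (a,b) k * P0 (a,b) k - (\<theta> a - \<theta> b) = 0"
    using feas unfolding tep_feasible_def by blast
  have key: "xo D i j k * P0o P0 i j k = \<theta> i - \<theta> j \<and> \<bar>P0o P0 i j k\<bar> \<le> capo D i j k"
  proof (cases "i < j")
    case True
    then have "corr i j = (i,j)" by (simp add: corr_def)
    with C cin k1 k2 have "- cap0 D (i,j) k \<le> P0 (i,j) k \<and> P0 (i,j) k \<le> cap0 D (i,j) k
      \<and> react0 D (i,j) k * P0 (i,j) k - (\<theta> i - \<theta> j) = 0" by fastforce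
    then show ?thesis unfolding xo_def capo_def P0o_def using True \<open>corr i j = (i,j)\<close> by auto
  next
    case False
    then have lt: "j < i" using ij by simp
    then have "corr i j = (j,i)" by (simp add: corr_def)
    with C cin k1 k2 have "- cap0 D (j,i) k \<le> P0 (j,i) k \<and> P0 (j,i) k \<le> cap0 D (j,i) k
      \<and> react0 D (j,i) k * P0 (j,i) k - (\<theta> j - \<theta> i) = 0" by fastforce
    then show ?thesis unfolding xo_def capo_def P0o_def using lt \<open>corr i j = (j,i)\<close> by auto
  qed
  {
    assume h: "pit_like = sgn (real_of_int (i - j)) * xo D i j k * P0tilde P0 i j k"
    have "sgn (real_of_int (i - j)) * sgn (real_of_int (j - i)) = -1"
      using ij by (cases "i < j") (auto simp: sgn_if)
    then have "pit_like = - (xo D i j k * P0o P0 i j k)"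
      unfolding h P0tilde_def by (metis (no_types, opaque_lifting) mult.assoc mult.left_commute mult_minus1)
    then show "pit_like = \<theta> j - \<theta> i" using key by simp
  }
  have "\<bar>\<theta> i - \<theta> j\<bar> = xo D i j k * \<bar>P0o P0 i j k\<bar>" using key xpos
    by (metis abs_mult abs_of_pos)
  also have "\<dots> \<le> xo D i j k * capo D i j k" using key xpos by (simp add: mult_left_mono)
  finally show "\<bar>\<theta> i - \<theta> j\<bar> \<le> xo D i j k * capo D i j k" .
qed


lemma telescope2:
  "(\<Sum>t=1..(n::nat). (f t - f (t - 1) :: real)) = f n - f 0"
proof (induction n)
  case 0 then show ?case by simp
next
  case (Suc n)
  have "(\<Sum>t=1..Suc n. f t - f (t - 1)) = (\<Sum>t=1..n. f t - f (t - 1)) + (f (Suc n) - f n)"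
    by (simp add: sum.cl_ivl_Suc)
  then show ?case using Suc by simp
qed

lemma path_facts:
  assumes wf: "tep_wf D" and neg: "\<forall>e k. susc0 D e k < 0"
    and feas: "tep_feasible D y P0 P g \<theta>"
    and est: "established_path D p"
    and ksok: "\<forall>t\<in>{1..length p - 1}. 1 \<le> ks t \<and> ks t \<le> w0 D (corr (p ! (t-1)) (p ! t))"
  shows "(\<Sum>t=1..length p - 1. pit D p ks t * P0tilde P0 (p ! (t-1)) (p ! t) (ks t))
           = \<theta> (last p) - \<theta> (hd p)"
    and "\<bar>\<theta> (last p) - \<theta> (hd p)\<bar> \<le> pi0 D p ks"
proof -
  have len: "length p \<ge> 2" and dist: "distinct p"
    and cor: "\<forall>t\<in>{1..length p - 1}. corr (p!(t-1)) (p!t) \<in> corridors D"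
    using est unfolding established_path_def by auto
  have ne: "\<And>t. t \<in> {1..length p - 1} \<Longrightarrow> p!(t-1) \<noteq> p!t"
  proof -
    fix t assume t: "t \<in> {1..length p - 1}"
    then have "t - 1 < length p" "t < length p" "t - 1 \<noteq> t" by auto
    then show "p!(t-1) \<noteq> p!t" using dist by (simp add: nth_eq_iff_index_eq)
  qed
  have pnn: "p \<noteq> []" using len by auto
  have hd: "hd p = p!0" using pnn by (simp add: hd_conv_nth)
  have lst: "last p = p!(length p - 1)" using pnn by (simp add: last_conv_nth)
  have tel: "(\<Sum>t=1..length p - 1. \<theta> (p!t) - \<theta> (p!(t-1))) = \<theta> (last p) - \<theta> (hd p)"
    using telescope2[of "\<lambda>t. \<theta> (p!t)" "length p - 1"] hd lst by simp
  have "(\<Sum>t=1..length p - 1. pit D p ks t * P0tilde P0 (p ! (t-1)) (p ! t) (ks t))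
      = (\<Sum>t=1..length p - 1. \<theta> (p!t) - \<theta> (p!(t-1)))"
  proof (rule sum.cong)
    fix t assume t: "t \<in> {1..length p - 1}"
    have c: "corr (p!(t-1)) (p!t) \<in> corridors D" using cor t by blast
    have k1: "1 \<le> ks t" and k2: "ks t \<le> w0 D (corr (p ! (t-1)) (p ! t))" using ksok t by blast+
    show "pit D p ks t * P0tilde P0 (p ! (t-1)) (p ! t) (ks t) = \<theta> (p!t) - \<theta> (p!(t-1))"
      by (rule edge_facts(1)[OF wf neg feas c ne[OF t] k1 k2]) (simp add: pit_def)
  qed simp
  then show "(\<Sum>t=1..length p - 1. pit D p ks t * P0tilde P0 (p ! (t-1)) (p ! t) (ks t))
           = \<theta> (last p) - \<theta> (hd p)" using tel by simp
  have "\<bar>\<theta> (last p) - \<theta> (hd p)\<bar> = \<bar>\<Sum>t=1..length p - 1. \<theta> (p!(t-1)) - \<theta> (p!t)\<bar>"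
  proof -
    have "(\<Sum>t=1..length p - 1. \<theta> (p!(t-1)) - \<theta> (p!t)) = - (\<Sum>t=1..length p - 1. \<theta> (p!t) - \<theta> (p!(t-1)))"
      by (simp add: sum_negf[symmetric])
    then show ?thesis using tel by simp
  qed
  also have "\<dots> \<le> (\<Sum>t=1..length p - 1. \<bar>\<theta> (p!(t-1)) - \<theta> (p!t)\<bar>)" by (rule sum_abs)
  also have "\<dots> \<le> pi0 D p ks" unfolding pi0_def
  proof (rule sum_mono)
    fix t assume t: "t \<in> {1..length p - 1}"
    show "\<bar>\<theta> (p!(t-1)) - \<theta> (p!t)\<bar> \<le> xo D (p!(t-1)) (p!t) (ks t) * capo D (p!(t-1)) (p!t) (ks t)"
    proof -
      have c: "corr (p!(t-1)) (p!t) \<in> corridors D" using cor t by blast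
      have k1: "1 \<le> ks t" and k2: "ks t \<le> w0 D (corr (p ! (t-1)) (p ! t))" using ksok t by blast+
      show ?thesis by (rule edge_facts(2)[OF wf neg feas c ne[OF t] k1 k2])
    qed
  qed
  finally show "\<bar>\<theta> (last p) - \<theta> (hd p)\<bar> \<le> pi0 D p ks" .
qed

theorem lemma2:
  fixes D :: tep_data and m :: nat
    and paths :: "nat \<Rightarrow> int list"
    and ks :: "nat \<Rightarrow> nat \<Rightarrow> nat"
  assumes wf: "tep_wf D"
    and reactance_pos: "\<forall>e k. susc0 D e k < 0"
    and m_gt: "m > 1"
    and paths_est: "\<forall>r<m. established_path D (paths r)"
    and same_start: "\<forall>r<m. \<forall>r'<m. hd (paths r) = hd (paths r')"
    and same_end: "\<forall>r<m. \<forall>r'<m. last (paths r) = last (paths r')"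
    and disj: "\<forall>r<m. \<forall>r'<m. r \<noteq> r' \<longrightarrow> interior (paths r) \<inter> interior (paths r') = {}"
    and ks_ok: "\<forall>r<m. \<forall>t\<in>{1..length (paths r) - 1}.
                   1 \<le> ks r t \<and> ks r t \<le> w0 D (corr (paths r ! (t-1)) (paths r ! t))"
  shows "\<forall>y P0 P g \<theta>. tep_feasible D y P0 P g \<theta> \<longrightarrow>
           (\<forall>r<m.
              - Min ((\<lambda>n. pi0 D (paths n) (ks n)) ` {..<m})
                \<le> (\<Sum>t=1..length (paths r) - 1.
                      pit D (paths r) (ks r) t
                      * P0tilde P0 (paths r ! (t-1)) (paths r ! t) (ks r t))
            \<and> (\<Sum>t=1..length (paths r) - 1.
                      pit D (paths r) (ks r) t
                      * P0tilde P0 (paths r ! (t-1)) (paths r ! t) (ks r t))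
                \<le> Min ((\<lambda>n. pi0 D (paths n) (ks n)) ` {..<m}))"
proof (intro allI impI)
  fix y P0 P g \<theta> r
  assume feas: "tep_feasible D y P0 P g \<theta>" and r: "r < m"
  let ?S = "(\<Sum>t=1..length (paths r) - 1.
                      pit D (paths r) (ks r) t
                      * P0tilde P0 (paths r ! (t-1)) (paths r ! t) (ks r t))"
  have S: "?S = \<theta> (last (paths r)) - \<theta> (hd (paths r))"
  proof -
    have e: "established_path D (paths r)" using paths_est r by simp
    have k: "\<forall>t\<in>{1..length (paths r) - 1}. 1 \<le> ks r t \<and> ks r t \<le> w0 D (corr (paths r ! (t-1)) (paths r ! t))"
      using ks_ok r by simp
    show ?thesis by (rule path_facts(1)[OF wf reactance_pos feas e k])
  qed
  have b: "\<bar>?S\<bar> \<le> Min ((\<lambda>n. pi0 D (paths n) (ks n)) ` {..<m})"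
  proof (subst Min_ge_iff)
    show "finite ((\<lambda>n. pi0 D (paths n) (ks n)) ` {..<m})" by simp
    show "(\<lambda>n. pi0 D (paths n) (ks n)) ` {..<m} \<noteq> {}" using r by auto
    show "\<forall>a\<in>(\<lambda>n. pi0 D (paths n) (ks n)) ` {..<m}. \<bar>?S\<bar> \<le> a"
    proof
      fix a assume "a \<in> (\<lambda>n. pi0 D (paths n) (ks n)) ` {..<m}"
      then obtain n where n: "n < m" "a = pi0 D (paths n) (ks n)" by auto
      have "\<bar>\<theta> (last (paths n)) - \<theta> (hd (paths n))\<bar> \<le> pi0 D (paths n) (ks n)"
      proof -
        have e: "established_path D (paths n)" using paths_est n(1) by simp
        have k: "\<forall>t\<in>{1..length (paths n) - 1}. 1 \<le> ks n t \<and> ks n t \<le> w0 D (corr (paths n ! (t-1)) (paths n ! t))"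
          using ks_ok n(1) by simp
        show ?thesis by (rule path_facts(2)[OF wf reactance_pos feas e k])
      qed
      moreover have "last (paths n) = last (paths r)"
        using same_end n(1) r by blast
      moreover have "hd (paths n) = hd (paths r)"
        using same_start n(1) r by blast
      ultimately show "\<bar>?S\<bar> \<le> a" using S n(2) by simp
    qed
  qed
  then show "- Min ((\<lambda>n. pi0 D (paths n) (ks n)) ` {..<m}) \<le> ?S \<and> ?S \<le> Min ((\<lambda>n. pi0 D (paths n) (ks n)) ` {..<m})"
    by linarith
qed

end
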